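(* Let $f:\mathbb{R}^n\to\mathbb{R}\cup\{\infty\}$ be a proper lower semicontinuous function with $\bar x\in\operatorname{dom} f$. Consider the assertions: (i) $\bar x$ is a strong local minimizer of $f$; (ii) $\bar x$ is a local minimizer of $f$ and $\partial f$ is strongly metrically subregular at $\bar x$ for $0$; (iii) $0\in\partial_p f(\bar x)$ and $\langle z,w\rangle>0$ for all $w\in\operatorname{dom}D(\partial f)(\bar x|0)\setminus\{0\}$ and all $z\in D(\partial f)(\bar x|0)(w)$. Then (iii) $\Rightarrow$ (ii) $\Rightarrow$ (i).
   Context: Tangent cone: $T_\Omega(\bar u)=\{v\mid \exists t_k\downarrow0,\ v_k\to v,\ \bar u+t_kv_k\in\Omega\}$. Limiting subdifferential $\partial f(\bar x)=\{v\mid (v,-1)\in N_{\operatorname{epi} f}(\bar x,f(\bar x))\}$ where $N$ is the limiting (Mordukhovich) normal cone; proximal subdifferential $\partial_p f(\bar x)=\{v\mid \liminf_{x\to\bar x}\frac{f(x)-f(\bar x)-\langle v,x-\bar x\rangle}{\|x-\bar x\|^2}>-\infty\}$. Graphical derivative: $DF(\bar x|\bar y)(w)=\{z\mid (w,z)\in T_{\operatorname{gph}F}(\bar x,\bar y)\}$, applied to $F=\partial f$; $\operatorname{dom}$ denotes the set where the map is nonempty. A set-valued map $F$ is metrically subregular at $\bar x$ for $\bar y\in F(\bar x)$ if there are $\kappa>0$ and a neighborhood $U$ of $\bar x$ with $d(x;F^{-1}(\bar y))\le\kappa\, d(\bar y;F(x))$ for all $x\in U$; it is strongly metrically subregular if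 in addition $\bar x$ is an isolated point of $F^{-1}(\bar y)$. $\bar x$ is a strong local minimizer of $f$ if there are $\kappa,\gamma>0$ with $f(x)-f(\bar x)\ge\frac\kappa2\|x-\bar x\|^2$ whenever $\|x-\bar x\|\le\gamma$. *)

theory Defs
  imports "HOL-Analysis.Analysis" "HOL-Library.Extended_Real"
begin

definition proper_fun :: "('a \<Rightarrow> ereal) \<Rightarrow> bool" where
  "proper_fun f \<longleftrightarrow> (\<forall>x. f x \<noteq> -\<infinity>) \<and> (\<exists>x. f x \<noteq> \<infinity>)"

definition lsc_fun :: "('a::topological_space \<Rightarrow> ereal) \<Rightarrow> bool" where
  "lsc_fun f \<longleftrightarrow> (\<forall>x. f x \<le> Liminf (at x) f)"

definition efdom :: "('a \<Rightarrow> ereal) \<Rightarrow> 'a set" where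
  "efdom f = {x. f x < \<infinity>}"

definition epigraph :: "('a \<Rightarrow> ereal) \<Rightarrow> ('a \<times> real) set" where
  "epigraph f = {(x, \<alpha>). f x \<le> ereal \<alpha>}"

definition frechet_normal :: "'a::real_inner set \<Rightarrow> 'a \<Rightarrow> 'a set" where
  "frechet_normal C z = {v. z \<in> C \<and>
     (\<forall>\<epsilon>>0. \<exists>\<delta>>0. \<forall>z'\<in>C. norm (z' - z) < \<delta> \<longrightarrow> inner v (z' - z) \<le> \<epsilon> * norm (z' - z))}"

definition limiting_normal :: "'a::real_inner set \<Rightarrow> 'a \<Rightarrow> 'a set" where
  "limiting_normal C z = {v. z \<in> C \<and> (\<exists>zk vk. (\<forall>k. zk k \<in> C \<and> vk k \<in> frechet_normal C (zk k))
        \<and> zk \<longlonglongrightarrow> z \<and> vk \<longlonglongrightarrow> v)}"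

definition limiting_subdiff :: "('a::real_inner \<Rightarrow> ereal) \<Rightarrow> 'a \<Rightarrow> 'a set" where
  "limiting_subdiff f x = {v. \<bar>f x\<bar> \<noteq> \<infinity> \<and>
       (v, -1) \<in> limiting_normal (epigraph f) (x, real_of_ereal (f x))}"

definition proximal_subdiff :: "('a::real_inner \<Rightarrow> ereal) \<Rightarrow> 'a \<Rightarrow> 'a set" where
  "proximal_subdiff f x = {v. \<bar>f x\<bar> \<noteq> \<infinity> \<and>
       Liminf (at x) (\<lambda>y. (f y - f x - ereal (inner v (y - x))) / ereal ((norm (y - x))\<^sup>2)) > -\<infinity>}"

definition tangent_cone :: "'a::real_normed_vector set \<Rightarrow> 'a \<Rightarrow> 'a set" where
  "tangent_cone \<Omega> u = {v. \<exists>t vk. (\<forall>k. t k > 0 \<and> u + t k *\<^sub>R vk k \<in> \<Omega>)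
        \<and> t \<longlonglongrightarrow> 0 \<and> vk \<longlonglongrightarrow> v}"

definition graph_of :: "('a \<Rightarrow> 'b set) \<Rightarrow> ('a \<times> 'b) set" where
  "graph_of F = {(x, y). y \<in> F x}"

definition graphical_derivative ::
  "('a::real_normed_vector \<Rightarrow> 'b::real_normed_vector set) \<Rightarrow> 'a \<Rightarrow> 'b \<Rightarrow> 'a \<Rightarrow> 'b set" where
  "graphical_derivative F x y w = {z. (w, z) \<in> tangent_cone (graph_of F) (x, y)}"

definition sv_dom :: "('a \<Rightarrow> 'b set) \<Rightarrow> 'a set" where
  "sv_dom G = {w. G w \<noteq> {}}"

definition set_dist :: "'a::metric_space \<Rightarrow> 'a set \<Rightarrow> ereal" where
  "set_dist y A = (if A = {} then \<infinity> else ereal (infdist y A))"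

definition metrically_subregular ::
  "('a::metric_space \<Rightarrow> 'b::metric_space set) \<Rightarrow> 'a \<Rightarrow> 'b \<Rightarrow> bool" where
  "metrically_subregular F xb yb \<longleftrightarrow> yb \<in> F xb \<and>
     (\<exists>\<kappa>>0. \<exists>U. open U \<and> xb \<in> U \<and>
        (\<forall>x\<in>U. set_dist x {u. yb \<in> F u} \<le> ereal \<kappa> * set_dist yb (F x)))"

definition strongly_metrically_subregular ::
  "('a::metric_space \<Rightarrow> 'b::metric_space set) \<Rightarrow> 'a \<Rightarrow> 'b \<Rightarrow> bool" where
  "strongly_metrically_subregular F xb yb \<longleftrightarrow> metrically_subregular F xb yb \<and>
     (\<exists>\<epsilon>>0. {u. yb \<in> F u} \<inter> ball xb \<epsilon> = {xb})"

definition local_minimizer :: "('a::metric_space \<Rightarrow> ereal) \<Rightarrow> 'a \<Rightarrow> bool" where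
  "local_minimizer f xb \<longleftrightarrow> (\<exists>\<gamma>>0. \<forall>x. dist x xb \<le> \<gamma> \<longrightarrow> f xb \<le> f x)"

definition strong_local_minimizer :: "('a::real_normed_vector \<Rightarrow> ereal) \<Rightarrow> 'a \<Rightarrow> bool" where
  "strong_local_minimizer f xb \<longleftrightarrow> (\<exists>\<kappa>>0. \<exists>\<gamma>>0. \<forall>x. norm (x - xb) \<le> \<gamma> \<longrightarrow>
       f x - f xb \<ge> ereal (\<kappa> / 2 * (norm (x - xb))\<^sup>2))"

end

theory Submission
  imports Defs
begin


lemma lsc_nhds:
  assumes "lsc_fun f" "a < f x"
  shows "eventually (\<lambda>y. a < f y) (nhds x)"
proof -
  have "f x \<le> Liminf (at x) f" using assms(1) lsc_fun_def by blast
  then have "eventually (\<lambda>y. a < f y) (at x)" using assms(2) le_Liminf_iff by blast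
  then show ?thesis using assms(2) eventually_nhds_conv_at by blast
qed

lemma lsc_plus_nhds:
  fixes f :: "'a::metric_space \<Rightarrow> ereal" and h :: "'a \<Rightarrow> real"
  assumes lsc: "lsc_fun f" and nm: "\<forall>x. f x \<noteq> -\<infinity>" and hc: "isCont h x"
    and lt: "ereal r < f x + ereal (h x)"
  shows "eventually (\<lambda>y. ereal r < f y + ereal (h y)) (nhds x)"
proof -
  have "ereal (r - h x) < f x" using lt nm by (cases "f x") auto
  then obtain s where s1: "ereal (r - h x) < ereal s" and s2: "ereal s < f x"
    using ereal_dense2 by blast
  have e1: "eventually (\<lambda>y. ereal s < f y) (nhds x)" using lsc_nhds[OF lsc s2] .
  have "(h \<longlongrightarrow> h x) (at x)" using hc isCont_def by blast
  moreover have "r - s < h x" using s1 by simp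
  ultimately have "eventually (\<lambda>y. r - s < h y) (at x)" by (rule order_tendstoD(1))
  then have e2: "eventually (\<lambda>y. r - s < h y) (nhds x)"
    using \<open>r - s < h x\<close> eventually_nhds_conv_at by blast
  from e1 e2 show ?thesis
  proof eventually_elim
    case (elim y)
    then show ?case using nm by (cases "f y") auto
  qed
qed

lemma lsc_min_exists:
  fixes f :: "'a::metric_space \<Rightarrow> ereal" and h :: "'a \<Rightarrow> real"
  assumes lsc: "lsc_fun f" and nm: "\<forall>x. f x \<noteq> -\<infinity>" and hc: "continuous_on UNIV h"
    and K: "compact K" "K \<noteq> {}"
  shows "\<exists>p\<in>K. \<forall>y\<in>K. f p + ereal (h p) \<le> f y + ereal (h y)"
proof (rule ccontr)
  define \<phi> where "\<phi> y = f y + ereal (h y)" for y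
  assume "\<not> ?thesis"
  then have "\<forall>p\<in>K. \<exists>y\<in>K. \<phi> y < \<phi> p" unfolding \<phi>_def by (auto simp: not_le)
  then obtain g where g: "\<forall>p\<in>K. g p \<in> K \<and> \<phi> (g p) < \<phi> p" by metis
  have "\<forall>p\<in>K. \<exists>U. open U \<and> p \<in> U \<and> (\<forall>y\<in>U. \<phi> (g p) < \<phi> y)"
  proof
    fix p assume p: "p \<in> K"
    have ne: "\<phi> (g p) \<noteq> -\<infinity>" using nm unfolding \<phi>_def by (cases "f (g p)") auto
    have ni: "\<phi> (g p) \<noteq> \<infinity>" using g p by auto
    obtain r where r: "\<phi> (g p) = ereal r" using ne ni by (cases "\<phi> (g p)") auto
    have "isCont h p" using hc by (simp add: continuous_on_eq_continuous_at)
    then have "eventually (\<lambda>y. ereal r < \<phi> y) (nhds p)"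
      unfolding \<phi>_def using lsc_plus_nhds[OF lsc nm] g p r unfolding \<phi>_def by auto
    then show "\<exists>U. open U \<and> p \<in> U \<and> (\<forall>y\<in>U. \<phi> (g p) < \<phi> y)"
      unfolding eventually_nhds using r by auto
  qed
  then obtain U where U: "\<forall>p\<in>K. open (U p) \<and> p \<in> U p \<and> (\<forall>y\<in>U p. \<phi> (g p) < \<phi> y)"
    by metis
  obtain C where C: "C \<subseteq> K" "finite C" "K \<subseteq> (\<Union>c\<in>C. U c)"
    using compactE_image[OF K(1), of K U] U by blast
  have Cne: "C \<noteq> {}" using C K(2) by auto
  define Y where "Y = \<phi> ` g ` C"
  have Yf: "finite Y" "Y \<noteq> {}" using C Cne unfolding Y_def by auto
  have "Min Y \<in> Y" using Min_in[OF Yf] .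
  then obtain p0 where p0: "p0 \<in> C" "\<phi> (g p0) = Min Y" unfolding Y_def by auto
  have "g p0 \<in> K" using g p0 C by auto
  then obtain p1 where p1: "p1 \<in> C" "g p0 \<in> U p1" using C by auto
  have "\<phi> (g p1) < \<phi> (g p0)" using U p1 C by auto
  moreover have "Min Y \<le> \<phi> (g p1)" using Yf p1 unfolding Y_def by auto
  ultimately show False using p0 by simp
qed

lemma prox_limiting:
  fixes f :: "'a::real_inner \<Rightarrow> ereal"
  assumes fp: "f p = ereal c" and \<rho>: "\<rho> > 0" and L: "L \<ge> 0"
    and ineq: "\<forall>y. dist y p < \<rho> \<longrightarrow> ereal (c + inner v (y - p) - L * (norm (y - p))\<^sup>2) \<le> f y"
  shows "v \<in> limiting_subdiff f p"
proof -
  have mem: "(p, c) \<in> epigraph f" using fp by (simp add: epigraph_def)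
  have fn: "(v, -1) \<in> frechet_normal (epigraph f) (p, c)"
    unfolding frechet_normal_def
  proof (intro CollectI conjI mem allI impI)
    fix \<epsilon> :: real assume e: "\<epsilon> > 0"
    define \<delta> where "\<delta> = min \<rho> (\<epsilon> / (L + 1))"
    have d: "\<delta> > 0" using e \<rho> L by (simp add: \<delta>_def)
    show "\<exists>\<delta>>0. \<forall>z'\<in>epigraph f. norm (z' - (p, c)) < \<delta> \<longrightarrow> inner (v, -1) (z' - (p, c)) \<le> \<epsilon> * norm (z' - (p, c))"
    proof (intro exI[of _ \<delta>] conjI ballI impI d)
      fix z' assume z': "z' \<in> epigraph f" "norm (z' - (p,c)) < \<delta>"
      obtain y \<alpha> where z'eq: "z' = (y, \<alpha>)" by (cases z')
      define N where "N = norm (z' - (p,c))"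
      have fy: "f y \<le> ereal \<alpha>" using z' z'eq by (simp add: epigraph_def)
      have n: "norm (y - p) \<le> N" using norm_fst_le[of "y - p" "\<alpha> - c"] z'eq by (simp add: N_def)
      have N0: "N \<ge> 0" by (simp add: N_def)
      have "dist y p < \<rho>" using n z'(2) unfolding N_def \<delta>_def by (simp add: dist_norm)
      then have "ereal (c + inner v (y - p) - L * (norm (y - p))\<^sup>2) \<le> ereal \<alpha>"
        using ineq fy order.trans by blast
      then have a: "c + inner v (y-p) - L*(norm(y-p))\<^sup>2 \<le> \<alpha>" by simp
      have "inner (v,-1) (z' - (p,c)) = inner v (y-p) - (\<alpha> - c)" using z'eq by simp
      also have "\<dots> \<le> L * (norm (y-p))\<^sup>2" using a by simp
      also have "\<dots> \<le> L * (N * N)"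
        using n L N0 by (intro mult_left_mono) (auto simp: power2_eq_square intro!: mult_mono)
      also have "\<dots> \<le> \<epsilon> * N"
      proof -
        have "N < \<epsilon> / (L + 1)" using z'(2) unfolding N_def \<delta>_def by simp
        then have "(L+1) * N < \<epsilon>" using L by (simp add: field_simps)
        then have "L * N \<le> \<epsilon>" using N0 by (smt (verit) mult_right_mono)
        then show ?thesis using N0 by (metis mult.assoc mult_right_mono)
      qed
      finally show "inner (v, -1) (z' - (p, c)) \<le> \<epsilon> * norm (z' - (p, c))" by (simp add: N_def)
    qed
  qed
  have "\<exists>zk vk. (\<forall>k. zk k \<in> epigraph f \<and> vk k \<in> frechet_normal (epigraph f) (zk k))
        \<and> zk \<longlonglongrightarrow> (p, c) \<and> vk \<longlonglongrightarrow> (v, -1)"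
    apply (rule exI[of _ "\<lambda>k. (p,c)"])
    apply (rule exI[of _ "\<lambda>k. (v,-1)"])
    using mem fn by simp
  then show ?thesis unfolding limiting_subdiff_def limiting_normal_def
    using fp mem by simp
qed



lemma posdef_bound:
  fixes F :: "'a::euclidean_space \<Rightarrow> 'a set" and xb :: 'a
  assumes pd: "\<forall>w \<in> sv_dom (graphical_derivative F xb 0) - {0}.
              \<forall>z \<in> graphical_derivative F xb 0 w. inner z w > 0"
    and C: "C \<ge> 0"
  shows "\<exists>\<delta>>0. \<exists>\<eta>>0. \<forall>p v. v \<in> F p \<longrightarrow> 0 < norm (p - xb) \<longrightarrow> norm (p - xb) < \<delta>
           \<longrightarrow> norm v \<le> C * norm (p - xb) \<longrightarrow> inner v (p - xb) > \<eta> * (norm (p - xb))\<^sup>2"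
proof (rule ccontr)
  assume H: "\<not> ?thesis"
  have "\<forall>k::nat. \<exists>p v. v \<in> F p \<and> 0 < norm (p - xb) \<and> norm (p - xb) < 1/(real k+1)
      \<and> norm v \<le> C * norm (p - xb) \<and> inner v (p - xb) \<le> 1/(real k+1) * (norm (p - xb))\<^sup>2"
  proof
    fix k :: nat
    have pos: "1/(real k+1) > 0" by simp
    show "\<exists>p v. v \<in> F p \<and> 0 < norm (p - xb) \<and> norm (p - xb) < 1/(real k+1)
      \<and> norm v \<le> C * norm (p - xb) \<and> inner v (p - xb) \<le> 1/(real k+1) * (norm (p - xb))\<^sup>2"
      using H pos by (meson not_less)
  qed
  then obtain P V where PV: "\<And>k. V k \<in> F (P k) \<and> 0 < norm (P k - xb) \<and> norm (P k - xb) < 1/(real k+1)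
      \<and> norm (V k) \<le> C * norm (P k - xb) \<and> inner (V k) (P k - xb) \<le> 1/(real k+1) * (norm (P k - xb))\<^sup>2"
    by metis
  define t where "t k = norm (P k - xb)" for k
  define W where "W k = (1 / t k) *\<^sub>R (P k - xb)" for k
  define Z where "Z k = (1 / t k) *\<^sub>R V k" for k
  have tpos: "t k > 0" for k using PV[of k] by (simp add: t_def)
  have Wn: "norm (W k) = 1" for k using tpos[of k] by (simp add: W_def t_def)
  have Zn: "norm (Z k) \<le> C" for k
  proof -
    have "norm (Z k) = norm (V k) / t k" using tpos[of k] by (simp add: Z_def)
    also have "\<dots> \<le> C" using PV[of k] tpos[of k] by (simp add: t_def divide_le_eq mult.commute)
    finally show ?thesis .
  qed
  have PVeq: "P k = xb + t k *\<^sub>R W k" "V k = 0 + t k *\<^sub>R Z k" for k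
    using tpos[of k] by (simp_all add: W_def Z_def)
  have iq: "inner (Z k) (W k) \<le> 1/(real k+1)" for k
  proof -
    have "inner (Z k) (W k) = inner (V k) (P k - xb) / (t k)\<^sup>2"
      by (simp add: Z_def W_def power2_eq_square)
    also have "\<dots> \<le> 1/(real k+1)"
      using PV[of k] tpos[of k] by (simp add: t_def divide_le_eq)
    finally show ?thesis .
  qed
  define S where "S = sphere (0::'a) 1 \<times> cball (0::'a) C"
  have cS: "compact S" unfolding S_def by (intro compact_Times compact_sphere compact_cball)
  have inS: "\<forall>k. (W k, Z k) \<in> S" using Wn Zn by (simp add: S_def)
  obtain l r where lr: "l \<in> S" "strict_mono r" "((\<lambda>k. (W k, Z k)) \<circ> r) \<longlonglongrightarrow> l"
    using seq_compactE[OF compact_imp_seq_compact[OF cS] inS] by blast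
  obtain w z where lwz: "l = (w, z)" by (cases l)
  have wn: "norm w = 1" using lr(1) lwz by (simp add: S_def)
  have tW: "(\<lambda>k. W (r k)) \<longlonglongrightarrow> w" using tendsto_fst[OF lr(3)] lwz by (simp add: o_def)
  have tZ: "(\<lambda>k. Z (r k)) \<longlonglongrightarrow> z" using tendsto_snd[OF lr(3)] lwz by (simp add: o_def)
  have lim1: "(\<lambda>k. 1/(real k+1)) \<longlonglongrightarrow> 0"
    using LIMSEQ_inverse_real_of_nat by (simp add: inverse_eq_divide add.commute)
  have t0: "t \<longlonglongrightarrow> 0"
  proof (rule tendsto_sandwich[of "\<lambda>_. 0" _ _ "\<lambda>k. 1/(real k+1)"])
    show "\<forall>\<^sub>F n in sequentially. 0 \<le> t n" using tpos by (simp add: less_imp_le)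
    show "\<forall>\<^sub>F n in sequentially. t n \<le> 1 / (real n + 1)" using PV by (simp add: t_def less_imp_le)
  qed (use lim1 in auto)
  have tr0: "(\<lambda>k. t (r k)) \<longlonglongrightarrow> 0" using LIMSEQ_subseq_LIMSEQ[OF t0 lr(2)] by (simp add: o_def)
  have "(w, z) \<in> tangent_cone (graph_of F) (xb, 0)"
    unfolding tangent_cone_def
  proof (intro CollectI exI[of _ "\<lambda>k. t (r k)"] exI[of _ "\<lambda>k. (W (r k), Z (r k))"] conjI allI)
    fix k
    show "t (r k) > 0" using tpos by simp
    show "(xb, 0) + t (r k) *\<^sub>R (W (r k), Z (r k)) \<in> graph_of F"
      using PV[of "r k"] PVeq[of "r k"] by (simp add: graph_of_def)
  next
    show "(\<lambda>k. t (r k)) \<longlonglongrightarrow> 0" by (rule tr0)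
    show "(\<lambda>k. (W (r k), Z (r k))) \<longlonglongrightarrow> (w, z)" by (intro tendsto_Pair tW tZ)
  qed
  then have zD: "z \<in> graphical_derivative F xb 0 w" by (simp add: graphical_derivative_def)
  then have "w \<in> sv_dom (graphical_derivative F xb 0) - {0}" using wn by (auto simp: sv_dom_def)
  then have pos: "inner z w > 0" using pd zD by blast
  have "(\<lambda>k. inner (Z (r k)) (W (r k))) \<longlonglongrightarrow> inner z w" by (intro tendsto_inner tW tZ)
  moreover have "(\<lambda>k. 1/(real (r k)+1)) \<longlonglongrightarrow> 0"
    using LIMSEQ_subseq_LIMSEQ[OF lim1 lr(2)] by (simp add: o_def)
  ultimately have "inner z w \<le> 0"
    by (rule LIMSEQ_le) (use iq in auto)
  then show False using pos by simp
qed



lemma sq_expand: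
  fixes x y p :: "'a::real_inner"
  shows "(norm (y - x))\<^sup>2 = (norm (y - p))\<^sup>2 + 2 * inner (y - p) (p - x) + (norm (p - x))\<^sup>2"
proof -
  have "y - x = (y - p) + (p - x)" by simp
  then have "(norm (y - x))\<^sup>2 = (norm ((y - p) + (p - x)))\<^sup>2" by metis
  also have "\<dots> = (norm (y - p))\<^sup>2 + 2 * inner (y - p) (p - x) + (norm (p - x))\<^sup>2"
    by (simp only: power2_norm_eq_inner inner_add_left inner_add_right inner_commute[of "p - x" "y - p"])
  finally show ?thesis .
qed

lemma partB:
  fixes f :: "'a::euclidean_space \<Rightarrow> ereal"
  assumes nm: "\<forall>x. f x \<noteq> -\<infinity>" and lsc: "lsc_fun f" and fx: "f xb = ereal c"
    and lm: "local_minimizer f xb" and sr: "strongly_metrically_subregular (limiting_subdiff f) xb 0"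
  shows "strong_local_minimizer f xb"
proof -
  define F where "F = limiting_subdiff f"
  define S where "S = {u. 0 \<in> F u}"
  obtain \<gamma> where g: "\<gamma> > 0" "\<forall>x. dist x xb \<le> \<gamma> \<longrightarrow> f xb \<le> f x"
    using lm unfolding local_minimizer_def by blast
  obtain \<kappa> U \<epsilon> where kU: "\<kappa> > 0" "open U" "xb \<in> U"
      "\<forall>x\<in>U. set_dist x S \<le> ereal \<kappa> * set_dist 0 (F x)"
    and e: "\<epsilon> > 0" "S \<inter> ball xb \<epsilon> = {xb}"
    using sr unfolding strongly_metrically_subregular_def metrically_subregular_def F_def S_def
    by blast
  obtain \<rho>0 where r0: "\<rho>0 > 0" "ball xb \<rho>0 \<subseteq> U" using kU open_contains_ball by blast
  define \<rho> where "\<rho> = min \<rho>0 (\<epsilon>/2)"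
  have rpos: "\<rho> > 0" using r0 e by (simp add: \<rho>_def)
  have SR: "dist p xb \<le> \<kappa> * norm v" if p: "dist p xb < \<rho>" and v: "v \<in> F p" for p v
  proof -
    have pU: "p \<in> U" using p r0 by (auto simp: \<rho>_def dist_commute)
    have Fne: "F p \<noteq> {}" using v by auto
    have Sne: "S \<noteq> {}" using e by auto
    have xbS: "xb \<in> S" using e by auto
    have "dist p xb \<le> infdist p S"
      unfolding infdist_notempty[OF Sne]
    proof (rule cINF_greatest[OF Sne])
      fix s assume s: "s \<in> S"
      show "dist p xb \<le> dist p s"
      proof (cases "s = xb")
        case False
        then have "s \<notin> ball xb \<epsilon>" using e(2) s by blast
        then have "dist xb s \<ge> \<epsilon>" by simp
        moreover have "dist xb s \<le> dist xb p + dist p s" by (rule dist_triangle)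
        moreover have "dist p xb < \<epsilon>/2" using p by (simp add: \<rho>_def)
        moreover have "dist xb p = dist p xb" by (rule dist_commute)
        ultimately show ?thesis by linarith
      qed simp
    qed
    moreover have "ereal (infdist p S) \<le> ereal \<kappa> * ereal (infdist 0 (F p))"
    proof -
      have "set_dist p S \<le> ereal \<kappa> * set_dist 0 (F p)" using kU(4) pU by blast
      then show ?thesis using Fne Sne by (simp add: set_dist_def)
    qed
    moreover have "infdist 0 (F p) \<le> norm v" using infdist_le[OF v, of 0] by simp
    ultimately have A: "dist p xb \<le> infdist p S" and B: "infdist p S \<le> \<kappa> * infdist 0 (F p)"
      and C: "infdist 0 (F p) \<le> norm v" by simp_all
    have "\<kappa> * infdist 0 (F p) \<le> \<kappa> * norm v" using C kU(1) by (intro mult_left_mono) auto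
    then show ?thesis using A B by linarith
  qed
  define \<theta> where "\<theta> = 1 / (16 * \<kappa>)"
  define M where "M = 4 * \<theta>"
  define \<gamma>' where "\<gamma>' = min \<gamma> \<rho> / 4"
  have thpos: "\<theta> > 0" using kU by (simp add: \<theta>_def)
  have gpos: "\<gamma>' > 0" using g rpos by (simp add: \<gamma>'_def)
  have main: "f x - f xb \<ge> ereal (\<theta> * (norm (x - xb))\<^sup>2)" if xn: "norm (x - xb) \<le> \<gamma>'" for x
  proof (cases "x = xb")
    case True then show ?thesis using fx by simp
  next
    case False
    define t where "t = norm (x - xb)"
    have tpos: "t > 0" using False by (simp add: t_def)
    show ?thesis
    proof (rule ccontr)
      assume "\<not> ?thesis"
      then have fxlt: "f x < ereal (c + \<theta> * t\<^sup>2)" using fx unfolding t_def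
        by (cases "f x") (auto simp: algebra_simps)
      define h where "h y = M * (norm (y - x))\<^sup>2" for y
      have hc: "continuous_on UNIV h" unfolding h_def by (intro continuous_intros)
      obtain p where p: "p \<in> cball xb (2*t)" "\<forall>y\<in>cball xb (2*t). f p + ereal (h p) \<le> f y + ereal (h y)"
        using lsc_min_exists[OF lsc nm hc, of "cball xb (2*t)"] tpos by auto
      have "f p + ereal (h p) \<le> f x + ereal (h x)" using p tpos by (auto simp: t_def dist_norm norm_minus_commute)
      then have phx: "f p + ereal (h p) < ereal (c + \<theta> * t\<^sup>2)" using fxlt by (simp add: h_def)
      have "4 * t \<le> min \<gamma> \<rho>" using xn by (simp add: t_def \<gamma>'_def)
      then have tg: "2 * t \<le> \<gamma>" "2*t \<le> \<rho> / 2" using tpos by auto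
      have fpc: "ereal c \<le> f p" using g(2) p tg fx by (auto simp: dist_commute)
      obtain fp where fp: "f p = ereal fp" using phx nm by (cases "f p") auto
      define s where "s = norm (p - x)"
      have s0: "s \<ge> 0" by (simp add: s_def)
      have "fp + M * s\<^sup>2 < c + \<theta> * t\<^sup>2" using phx fp by (simp add: h_def s_def)
      moreover have "c \<le> fp" using fpc fp by simp
      ultimately have "M * s\<^sup>2 < \<theta> * t\<^sup>2" by simp
      then have "(2 * s)\<^sup>2 < t\<^sup>2" using thpos by (simp add: M_def power_mult_distrib)
      then have st: "2 * s < t" by (rule power_less_imp_less_base) (use tpos in simp)
      have d1: "t \<le> s + dist p xb" using norm_triangle_ineq[of "x - p" "p - xb"]
        by (simp add: t_def s_def dist_norm norm_minus_commute)
      have d2: "dist p xb \<le> t + s" using norm_triangle_ineq[of "p - x" "x - xb"]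
        by (simp add: t_def s_def dist_norm)
      define v where "v = (2 * M) *\<^sub>R (x - p)"
      have vF: "v \<in> F p" unfolding F_def
      proof (rule prox_limiting[of f p fp "2*t - dist p xb" M v, OF fp])
        show "2 * t - dist p xb > 0" using d2 st s0 by simp
        show "M \<ge> 0" using thpos by (simp add: M_def)
        show "\<forall>y. dist y p < 2 * t - dist p xb \<longrightarrow>
            ereal (fp + inner v (y - p) - M * (norm (y - p))\<^sup>2) \<le> f y"
        proof (intro allI impI)
          fix y assume y: "dist y p < 2 * t - dist p xb"
          have "dist xb y \<le> dist xb p + dist p y" by (rule dist_triangle)
          then have "y \<in> cball xb (2*t)" using y by (simp add: dist_commute)
          then have le: "f p + ereal (h p) \<le> f y + ereal (h y)" using p by blast
          have i1: "inner v (y - p) = -(2*M) * inner (y - p) (p - x)"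
            unfolding v_def by (simp add: inner_diff_left inner_diff_right inner_commute algebra_simps)
          have eq: "fp + inner v (y - p) - M * (norm (y - p))\<^sup>2 = fp + h p - h y"
            unfolding h_def i1 sq_expand[of y x p] by (simp add: algebra_simps)
          show "ereal (fp + inner v (y - p) - M * (norm (y - p))\<^sup>2) \<le> f y"
            unfolding eq using le fp nm by (cases "f y") auto
        qed
      qed
      have "dist p xb < \<rho>" using d2 st tg s0 by simp
      then have "dist p xb \<le> \<kappa> * norm v" using SR vF by blast
      also have "\<kappa> * norm v = \<kappa> * (2 * M) * s" using thpos
        by (simp add: v_def s_def norm_minus_commute M_def)
      also have "\<dots> = s / 2" using kU(1) by (simp add: M_def \<theta>_def)
      finally show False using d1 st s0 by simp
    qed
  qed
  show ?thesis unfolding strong_local_minimizer_def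
    apply (rule exI[of _ "2 * \<theta>"])
    using thpos gpos main by auto
qed



lemma prox_quad:
  fixes f :: "'a::euclidean_space \<Rightarrow> ereal"
  assumes nm: "\<forall>x. f x \<noteq> -\<infinity>" and fx: "f xb = ereal c"
    and prox: "0 \<in> proximal_subdiff f xb"
  shows "\<exists>r0>0. \<exists>Lq\<ge>0. \<forall>y. dist y xb < r0 \<longrightarrow> ereal (c - Lq * (norm (y - xb))\<^sup>2) \<le> f y"
proof -
  define Q where "Q y = (f y - f xb - ereal (inner 0 (y - xb))) / ereal ((norm (y - xb))\<^sup>2)" for y
  have "Liminf (at xb) Q > -\<infinity>" using prox unfolding proximal_subdiff_def Q_def by simp
  then obtain z where z: "-\<infinity> < ereal z" "ereal z < Liminf (at xb) Q" using ereal_dense2 by blast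
  have "eventually (\<lambda>y. ereal z < Q y) (at xb)"
    using le_Liminf_iff[THEN iffD1, OF order_refl, of "at xb" Q] z(2) by blast
  then obtain d where d: "d > 0" "\<forall>y. y \<noteq> xb \<and> dist y xb < d \<longrightarrow> ereal z < Q y"
    unfolding eventually_at by auto
  have "\<forall>y. dist y xb < d \<longrightarrow> ereal (c - \<bar>z\<bar> * (norm (y - xb))\<^sup>2) \<le> f y"
  proof (intro allI impI)
    fix y assume y: "dist y xb < d"
    show "ereal (c - \<bar>z\<bar> * (norm (y - xb))\<^sup>2) \<le> f y"
    proof (cases "y = xb")
      case True then show ?thesis using fx by simp
    next
      case False
      define n2 where "n2 = (norm (y - xb))\<^sup>2"
      have n2: "n2 > 0" using False by (simp add: n2_def)
      have zq: "ereal z < Q y" using d y False by blast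
      show ?thesis
      proof (cases "f y")
        case (real a)
        then have "z < (a - c) / n2" using zq fx n2 by (simp add: Q_def n2_def[symmetric])
        then have "z * n2 < a - c" using n2 by (simp add: pos_less_divide_eq)
        moreover have "- \<bar>z\<bar> * n2 \<le> z * n2" using n2 by (intro mult_right_mono) auto
        ultimately show ?thesis using real by (simp add: n2_def[symmetric])
      next
        case PInf then show ?thesis by simp
      next
        case MInf then show ?thesis using nm by simp
      qed
    qed
  qed
  then show ?thesis using d(1) by (intro exI[of _ d] conjI exI[of _ "\<bar>z\<bar>"]) auto
qed



lemma partA:
  fixes f :: "'a::euclidean_space \<Rightarrow> ereal"
  assumes nm: "\<forall>x. f x \<noteq> -\<infinity>" and lsc: "lsc_fun f" and fx: "f xb = ereal c"
    and prox: "0 \<in> proximal_subdiff f xb"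
    and pd: "\<forall>w \<in> sv_dom (graphical_derivative (limiting_subdiff f) xb 0) - {0}.
              \<forall>z \<in> graphical_derivative (limiting_subdiff f) xb 0 w. inner z w > 0"
  shows "local_minimizer f xb \<and> strongly_metrically_subregular (limiting_subdiff f) xb 0"
proof -
  define F where "F = limiting_subdiff f"
  define S where "S = {u. 0 \<in> F u}"
  obtain r0 Lq where rL: "r0 > 0" "Lq \<ge> 0"
    "\<forall>y. dist y xb < r0 \<longrightarrow> ereal (c - Lq * (norm (y - xb))\<^sup>2) \<le> f y"
    using prox_quad[OF nm fx prox] by blast
  have F0: "0 \<in> F xb" unfolding F_def
    by (rule prox_limiting[of f xb c r0 Lq 0, OF fx rL(1) rL(2)]) (use rL(3) in simp)
  define A where "A = 4 * Lq + 1"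
  have A1: "A \<ge> 1" using rL by (simp add: A_def)
  obtain \<delta> \<eta> where de: "\<delta> > 0" "\<eta> > 0"
    "\<forall>p v. v \<in> F p \<longrightarrow> 0 < norm (p - xb) \<longrightarrow> norm (p - xb) < \<delta>
           \<longrightarrow> norm v \<le> (2*A) * norm (p - xb) \<longrightarrow> inner v (p - xb) > \<eta> * (norm (p - xb))\<^sup>2"
    using posdef_bound[of "limiting_subdiff f" xb "2*A"] pd A1 unfolding F_def by auto
  define \<kappa> where "\<kappa> = 1 + 1 / \<eta>"
  have ie: "1 / \<eta> > 0" using de(2) by simp
  have kpos: "\<kappa> > 0" "\<kappa> \<ge> 1" unfolding \<kappa>_def using ie by linarith+
  have bound: "dist x xb \<le> \<kappa> * norm v" if x: "dist x xb < \<delta>" and v: "v \<in> F x" for x v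
  proof -
    define n where "n = norm (x - xb)"
    have dn: "dist x xb = n" by (simp add: n_def dist_norm)
    show ?thesis
    proof (cases "n = 0")
      case True then show ?thesis using dn kpos by simp
    next
      case False
      then have n0: "n > 0" by (simp add: n_def)
      show ?thesis
      proof (cases "norm v > n")
        case True
        have "norm v \<le> \<kappa> * norm v" using kpos by (simp add: mult_le_cancel_right1)
        then show ?thesis using True dn by simp
      next
        case False
        have "1 * n \<le> (2*A) * n" using A1 n0 by (intro mult_right_mono) auto
        then have "norm v \<le> (2*A) * n" using False by linarith
        then have "inner v (x - xb) > \<eta> * n\<^sup>2" using de(3) v n0 x dn by (auto simp: n_def)
        moreover have "inner v (x - xb) \<le> norm v * n" using norm_cauchy_schwarz by (simp add: n_def)
        ultimately have "\<eta> * n * n < norm v * n" by (simp add: power2_eq_square mult.assoc)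
        then have "\<eta> * n < norm v" using n0 by simp
        then have "n < norm v / \<eta>" using de(2) by (simp add: pos_less_divide_eq mult.commute)
        also have "\<dots> \<le> \<kappa> * norm v" using de(2) by (simp add: \<kappa>_def algebra_simps)
        finally show ?thesis using dn by simp
      qed
    qed
  qed
  have xbS: "xb \<in> S" using F0 by (simp add: S_def)
  have msr: "metrically_subregular F xb 0"
    unfolding metrically_subregular_def
  proof (intro conjI F0 exI[of _ \<kappa>] kpos(1) exI[of _ "ball xb \<delta>"] open_ball ballI)
    show "xb \<in> ball xb \<delta>" using de by simp
    fix x assume x: "x \<in> ball xb \<delta>"
    show "set_dist x {u. 0 \<in> F u} \<le> ereal \<kappa> * set_dist 0 (F x)"
    proof (cases "F x = {}")
      case True then show ?thesis using kpos by (simp add: set_dist_def)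
    next
      case False
      have "dist x xb / \<kappa> \<le> infdist 0 (F x)"
        unfolding infdist_notempty[OF False]
      proof (rule cINF_greatest[OF False])
        fix v assume "v \<in> F x"
        then have "dist x xb \<le> \<kappa> * norm v" using bound x by (simp add: dist_commute)
        then show "dist x xb / \<kappa> \<le> dist 0 v" using kpos by (simp add: divide_le_eq mult.commute)
      qed
      then have "dist x xb \<le> \<kappa> * infdist 0 (F x)" using kpos by (simp add: divide_le_eq mult.commute)
      moreover have "infdist x S \<le> dist x xb" using infdist_le[OF xbS] .
      ultimately show ?thesis using False xbS by (auto simp: set_dist_def S_def)
    qed
  qed
  have iso: "{u. 0 \<in> F u} \<inter> ball xb \<delta> = {xb}"
  proof
    show "{xb} \<subseteq> {u. 0 \<in> F u} \<inter> ball xb \<delta>" using F0 de by simp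
    show "{u. 0 \<in> F u} \<inter> ball xb \<delta> \<subseteq> {xb}"
    proof
      fix u assume u: "u \<in> {u. 0 \<in> F u} \<inter> ball xb \<delta>"
      show "u \<in> {xb}"
      proof (rule ccontr)
        assume "u \<notin> {xb}"
        then have "0 < norm (u - xb)" by simp
        moreover have "norm (u - xb) < \<delta>" using u by (simp add: dist_norm norm_minus_commute)
        moreover have uF: "0 \<in> F u" using u by simp
        ultimately have "inner 0 (u - xb) > \<eta> * (norm (u - xb))\<^sup>2"
          using de(3)[rule_format, of 0 u] A1 by simp
        moreover have "\<eta> * (norm (u - xb))\<^sup>2 > 0" using de(2) \<open>0 < norm (u - xb)\<close> by simp
        ultimately show False by simp
      qed
    qed
  qed
  have smr: "strongly_metrically_subregular F xb 0"
    unfolding strongly_metrically_subregular_def using msr iso de(1) by blast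
  define r where "r = min r0 \<delta> / 2"
  have rpos: "r > 0" using rL de by (simp add: r_def)
  have lm: "f xb \<le> f x" if xd: "dist x xb \<le> r / 2" for x
  proof (rule ccontr)
    assume "\<not> f xb \<le> f x"
    then have fxl: "f x < ereal c" using fx by simp
    then have xne: "x \<noteq> xb" using fx by auto
    define t where "t = norm (x - xb)"
    have tpos: "t > 0" using xne by (simp add: t_def)
    have tr: "t \<le> r / 2" using xd by (simp add: t_def dist_norm)
    define H where "H y = A * (max 0 (norm (y - xb) - t))\<^sup>2" for y
    have Hc: "continuous_on UNIV H" unfolding H_def by (intro continuous_intros)
    obtain p where p: "p \<in> cball xb r" "\<forall>y\<in>cball xb r. f p + ereal (H p) \<le> f y + ereal (H y)"
      using lsc_min_exists[OF lsc nm Hc, of "cball xb r"] rpos by auto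
    have Hx: "H x = 0" by (simp add: H_def t_def)
    have Hxb: "H xb = 0" using tpos by (simp add: H_def)
    have "x \<in> cball xb r" using xd rpos by (simp add: dist_commute)
    then have "f p + ereal (H p) \<le> f x" using p Hx by fastforce
    then have php: "f p + ereal (H p) < ereal c" using fxl by simp
    obtain fp where fp: "f p = ereal fp" using php nm by (cases "f p") auto
    define s where "s = norm (p - xb)"
    have sr: "s \<le> r" using p by (simp add: s_def dist_norm norm_minus_commute)
    have "f p + ereal (H p) \<le> f xb + ereal (H xb)" using p rpos by auto
    have slt: "s < r"
    proof (rule ccontr)
      assume "\<not> s < r"
      then have sr': "s = r" using sr by simp
      have "r < r0" using rL(1) de(1) by (simp add: r_def)
      then have "dist p xb < r0" using sr' by (simp add: s_def dist_norm)
      then have "ereal (c - Lq * s\<^sup>2) \<le> f p" using rL(3) by (simp add: s_def)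
      then have a: "c - Lq * r\<^sup>2 \<le> fp" using fp sr' by simp
      have "r - t \<ge> r / 2" using tr by simp
      then have "(r/2)\<^sup>2 \<le> (r - t)\<^sup>2" using rpos by (intro power_mono) auto
      then have "A * (r/2)\<^sup>2 \<le> A * (r - t)\<^sup>2" using A1 by (intro mult_left_mono) auto
      moreover have "H p = A * (r - t)\<^sup>2" using sr' tr rpos by (simp add: H_def s_def)
      moreover have "A * (r/2)\<^sup>2 \<ge> Lq * r\<^sup>2" using rL(2) by (simp add: A_def power2_eq_square algebra_simps)
      ultimately have "fp + H p \<ge> c" using a by simp
      then show False using php fp by simp
    qed
    have s0: "s > 0"
    proof (rule ccontr)
      assume "\<not> s > 0"
      then have "p = xb" by (simp add: s_def)
      then show False using php fx Hxb by simp
    qed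
    define a where "a = (if s > t then 1 - t / s else 0)"
    define q where "q = p - a *\<^sub>R (p - xb)"
    have a01: "0 \<le> a" "a \<le> 1" using s0 tpos by (auto simp: a_def)
    have qx: "norm (q - xb) \<le> t"
    proof -
      have "q - xb = (1 - a) *\<^sub>R (p - xb)" by (simp add: q_def algebra_simps)
      then have "norm (q - xb) = (1 - a) * s" using a01 by (simp add: s_def)
      also have "\<dots> \<le> t" using s0 tpos by (auto simp: a_def)
      finally show ?thesis .
    qed
    have Hle: "H y \<le> A * (norm (y - q))\<^sup>2" for y
    proof -
      have "norm (y - xb) \<le> norm (y - q) + norm (q - xb)" using norm_triangle_ineq[of "y - q" "q - xb"] by simp
      then have "max 0 (norm (y - xb) - t) \<le> norm (y - q)" using qx by simp
      then have "(max 0 (norm (y - xb) - t))\<^sup>2 \<le> (norm (y - q))\<^sup>2" by (intro power_mono) auto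
      then show ?thesis using A1 unfolding H_def by (intro mult_left_mono) auto
    qed
    have pq: "p - q = a *\<^sub>R (p - xb)" by (simp add: q_def)
    have Hp: "H p = A * (norm (p - q))\<^sup>2"
    proof (cases "s > t")
      case True
      have "norm (p - q) = a * s" using a01 by (simp add: pq s_def)
      also have "a * s = s - t" using True s0 by (simp add: a_def field_simps)
      finally have "norm (p - q) = s - t" .
      then show ?thesis using True by (simp add: H_def s_def)
    next
      case False
      then show ?thesis by (simp add: H_def pq a_def s_def)
    qed
    define v where "v = (- (2 * A)) *\<^sub>R (p - q)"
    have vF: "v \<in> F p" unfolding F_def
    proof (rule prox_limiting[of f p fp "r - s" A v, OF fp])
      show "r - s > 0" using slt by simp
      show "A \<ge> 0" using A1 by simp
      show "\<forall>y. dist y p < r - s \<longrightarrow> ereal (fp + inner v (y - p) - A * (norm (y - p))\<^sup>2) \<le> f y"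
      proof (intro allI impI)
        fix y assume y: "dist y p < r - s"
        have "dist xb y \<le> dist xb p + dist p y" by (rule dist_triangle)
        then have "y \<in> cball xb r" using y by (simp add: dist_commute s_def dist_norm norm_minus_commute)
        then have le: "f p + ereal (H p) \<le> f y + ereal (H y)" using p by blast
        have i1: "inner v (y - p) = -(2*A) * inner (y - p) (p - q)"
          unfolding v_def by (simp add: inner_commute)
        have eq: "fp + inner v (y - p) - A * (norm (y - p))\<^sup>2
             = fp + A * (norm (p - q))\<^sup>2 - A * (norm (y - q))\<^sup>2"
          unfolding i1 sq_expand[of y q p] by (simp add: algebra_simps)
        have "fp + A * (norm (p - q))\<^sup>2 - A * (norm (y - q))\<^sup>2 \<le> fp + H p - H y"
          using Hle[of y] Hp by simp
        moreover have "ereal (fp + H p - H y) \<le> f y" using le fp nm by (cases "f y") auto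
        ultimately show "ereal (fp + inner v (y - p) - A * (norm (y - p))\<^sup>2) \<le> f y"
          unfolding eq by (meson ereal_less_eq(3) order_trans)
      qed
    qed
    have vv: "v = (- (2 * A * a)) *\<^sub>R (p - xb)" by (simp add: v_def pq)
    have "norm v = 2 * A * a * s" using A1 a01 by (simp add: vv s_def)
    also have "\<dots> \<le> (2*A) * s" using A1 a01 s0 by (simp add: mult_le_cancel_left1)
    finally have nv: "norm v \<le> (2*A) * norm (p - xb)" by (simp add: s_def)
    have "s < \<delta>" using slt rpos by (simp add: r_def)
    then have "inner v (p - xb) > \<eta> * s\<^sup>2" using de(3) vF s0 nv by (simp add: s_def)
    moreover have "inner v (p - xb) = - (2 * A * a) * s\<^sup>2" by (simp add: vv s_def power2_norm_eq_inner)
    moreover have "- (2 * A * a) * s\<^sup>2 \<le> 0" using A1 a01 by simp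
    moreover have "\<eta> * s\<^sup>2 > 0" using de(2) s0 by simp
    ultimately show False by linarith
  qed
  have "local_minimizer f xb" unfolding local_minimizer_def
    using lm rpos by (intro exI[of _ "r/2"]) auto
  then show ?thesis using smr by (simp add: F_def)
qed


theorem theorem3p3:
  fixes f :: "'a::euclidean_space \<Rightarrow> ereal" and xb :: 'a
  assumes "proper_fun f" and "lsc_fun f" and "xb \<in> efdom f"
  shows "((0 \<in> proximal_subdiff f xb \<and>
           (\<forall>w \<in> sv_dom (graphical_derivative (limiting_subdiff f) xb 0) - {0}.
              \<forall>z \<in> graphical_derivative (limiting_subdiff f) xb 0 w. inner z w > 0))
          \<longrightarrow> (local_minimizer f xb \<and> strongly_metrically_subregular (limiting_subdiff f) xb 0))
       \<and> ((local_minimizer f xb \<and> strongly_metrically_subregular (limiting_subdiff f) xb 0)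
          \<longrightarrow> strong_local_minimizer f xb)"
proof -
  have nm: "\<forall>x. f x \<noteq> -\<infinity>" using assms(1) unfolding proper_fun_def by (rule conjunct1)
  have lt: "f xb < \<infinity>" using assms(3) unfolding efdom_def by simp
  have nmx: "f xb \<noteq> -\<infinity>" using nm by (rule spec)
  obtain c where fx: "f xb = ereal c" using lt nmx by (cases "f xb") auto
  show ?thesis
  proof (rule conjI; rule impI)
    assume h: "0 \<in> proximal_subdiff f xb \<and>
           (\<forall>w \<in> sv_dom (graphical_derivative (limiting_subdiff f) xb 0) - {0}.
              \<forall>z \<in> graphical_derivative (limiting_subdiff f) xb 0 w. inner z w > 0)"
    show "local_minimizer f xb \<and> strongly_metrically_subregular (limiting_subdiff f) xb 0"
      by (rule partA[OF nm assms(2) fx conjunct1[OF h] conjunct2[OF h]])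
  next
    assume h: "local_minimizer f xb \<and> strongly_metrically_subregular (limiting_subdiff f) xb 0"
    show "strong_local_minimizer f xb"
      by (rule partB[OF nm assms(2) fx conjunct1[OF h] conjunct2[OF h]])
  qed
qed

end
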